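(* Let $k\geq 8$ and $2k+1\leq n\leq 4k$ be integers, and let $h(n,k)=\binom{n-1}{k-1}-\binom{n-k-1}{k-1}+1$. Then \[ \binom{n-2}{k-2}+\binom{n-4}{k-2}+\frac{h(n,k)^2}{\binom{n-2}{k-2}+\binom{n-4}{k-2}}>2\binom{n-1}{k-1}. \] *)

theory Defs
  imports Complex_Main
begin

definition h :: "nat \<Rightarrow> nat \<Rightarrow> real" where
  "h n k = real ((n - 1) choose (k - 1)) - real ((n - k - 1) choose (k - 1)) + 1"

end

theory Submission
  imports Defs
begin

lemma choose_step: "Suc K * (a choose Suc K) = (a - K) * (a choose K)"
  using binomial_absorption binomial_absorb_comp by metis

lemma choose_pow:
  assumes "a \<le> b"
  shows "real (a choose K) * real b ^ K \<le> real (b choose K) * real a ^ K"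
proof (induction K)
  case 0
  then show ?case by simp
next
  case (Suc K)
  have ea: "real (a choose Suc K) * real (Suc K) = real (a - K) * real (a choose K)"
    by (metis choose_step of_nat_mult mult.commute)
  have eb: "real (b choose Suc K) * real (Suc K) = real (b - K) * real (b choose K)"
    by (metis choose_step of_nat_mult mult.commute)
  have ab: "real (a - K) * real b \<le> real (b - K) * real a"
  proof (cases "a \<le> K")
    case True then show ?thesis by simp
  next
    case False
    then have "real (a - K) = real a - real K" "real (b - K) = real b - real K"
      using assms by auto
    then show ?thesis using assms by (simp add: algebra_simps mult_left_mono)
  qed
  have "(real (a - K) * real b) * (real (a choose K) * real b ^ K)
      \<le> (real (b - K) * real a) * (real (b choose K) * real a ^ K)"
    by (rule mult_mono[OF ab Suc.IH]) auto
  moreover have "real (Suc K) * (real (a choose Suc K) * real b ^ Suc K)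
      = (real (a - K) * real b) * (real (a choose K) * real b ^ K)"
  proof -
    have "real (Suc K) * (real (a choose Suc K) * real b ^ Suc K)
       = (real (a choose Suc K) * real (Suc K)) * (real b * real b ^ K)"
      by (simp only: power_Suc mult_ac)
    also have "\<dots> = (real (a - K) * real (a choose K)) * (real b * real b ^ K)"
      by (simp only: ea)
    finally show ?thesis by (simp only: mult_ac)
  qed
  moreover have "real (Suc K) * (real (b choose Suc K) * real a ^ Suc K)
      = (real (b - K) * real a) * (real (b choose K) * real a ^ K)"
  proof -
    have "real (Suc K) * (real (b choose Suc K) * real a ^ Suc K)
       = (real (b choose Suc K) * real (Suc K)) * (real a * real a ^ K)"
      by (simp only: power_Suc mult_ac)
    also have "\<dots> = (real (b - K) * real (b choose K)) * (real a * real a ^ K)"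
      by (simp only: eb)
    finally show ?thesis by (simp only: mult_ac)
  qed
  ultimately have "real (Suc K) * (real (a choose Suc K) * real b ^ Suc K)
      \<le> real (Suc K) * (real (b choose Suc K) * real a ^ Suc K)"
    by linarith
  then show ?case using mult_le_cancel_left_pos[of "real (Suc K)"] by simp
qed

lemma key:
  fixes x r q u u0 u1 :: real
  assumes "0 \<le> x" "x \<le> u" "0 \<le> r" "r \<le> (16/15)^2 * (1 - 7*u/8)^2"
    "0 \<le> q" "q \<le> 1 - u" "u0 \<le> u" "u \<le> u1" "0 \<le> u0" "u1 \<le> 1"
    "u1 * (1 + (16/15)^2 * (1 - 7*u0/8)^2) < 1"
    "2 * (1 - u0)^7 < (1 - u1 * (1 + (16/15)^2 * (1 - 7*u0/8)^2))^2"
  shows "x * (1 + r) < 1 \<and> 2 * q^7 < (1 - x * (1 + r))^2"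
proof -
  define a1 where "a1 = u1 * (1 + (16/15)^2 * (1 - 7*u0/8)^2)"
  have s: "(1 - 7*u/8)^2 \<le> (1 - 7*u0/8)^2"
    using assms by (intro power_mono) auto
  have "r \<le> (16/15)^2 * (1 - 7*u0/8)^2"
  proof -
    have "(16/15)^2 * (1 - 7*u/8)^2 \<le> (16/15)^2 * (1 - 7*u0/8)^2"
      by (rule mult_left_mono[OF s]) simp
    then show ?thesis using assms(4) by linarith
  qed
  then have "1 + r \<le> 1 + (16/15)^2 * (1 - 7*u0/8)^2" by simp
  then have xa: "x * (1 + r) \<le> a1" unfolding a1_def
    using assms by (intro mult_mono) auto
  have a1: "a1 < 1" using assms(11) a1_def by simp
  have "(1 - a1)^2 \<le> (1 - x * (1 + r))^2"
    using xa a1 by (intro power_mono) auto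
  moreover have "q^7 \<le> (1 - u0)^7" using assms by (intro power_mono) auto
  moreover have "2*(1-u0)^7 < (1-a1)^2" using assms(12) a1_def by simp
  ultimately show ?thesis using xa a1 by linarith
qed

lemma key2:
  fixes x r q u :: real
  assumes "0 \<le> x" "x \<le> u" "0 \<le> r" "r \<le> (16/15)^2 * (1 - 7*u/8)^2"
    "0 \<le> q" "q \<le> 1 - u" "1/4 \<le> u" "u \<le> 1/2"
  shows "x * (1 + r) < 1 \<and> 2 * q^7 < (1 - x * (1 + r))^2"
proof -
  consider "u \<le> 11/40" | "11/40 \<le> u" "u \<le> 13/40" | "13/40 \<le> u" "u \<le> 3/8"
    | "3/8 \<le> u" "u \<le> 17/40" | "17/40 \<le> u" by linarith
  then show ?thesis
  proof cases
    case 1 then show ?thesis using assms by (intro key[of x u r q "1/4" "11/40"]) (auto simp: power_divide power2_eq_square)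
  next
    case 2 then show ?thesis using assms by (intro key[of x u r q "11/40" "13/40"]) (auto simp: power_divide power2_eq_square)
  next
    case 3 then show ?thesis using assms by (intro key[of x u r q "13/40" "3/8"]) (auto simp: power_divide power2_eq_square)
  next
    case 4 then show ?thesis using assms by (intro key[of x u r q "3/8" "17/40"]) (auto simp: power_divide power2_eq_square)
  next
    case 5 then show ?thesis using assms by (intro key[of x u r q "17/40" "1/2"]) (auto simp: power_divide power2_eq_square)
  qed
qed

theorem lemma2p9:
  fixes n k :: nat
  assumes "k \<ge> 8" and "2 * k + 1 \<le> n" and "n \<le> 4 * k"
  shows "real ((n - 2) choose (k - 2)) + real ((n - 4) choose (k - 2))
         + (h n k)^2 / (real ((n - 2) choose (k - 2)) + real ((n - 4) choose (k - 2)))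
         > 2 * real ((n - 1) choose (k - 1))"
proof -
  define B where "B = real ((n - 1) choose (k - 1))"
  define C1 where "C1 = real ((n - 2) choose (k - 2))"
  define C2 where "C2 = real ((n - 4) choose (k - 2))"
  define D where "D = real ((n - k - 1) choose (k - 1))"
  define N where "N = real n"
  define K where "K = real k"
  have K8: "K \<ge> 8" using assms(1) K_def by simp
  have NK1: "N \<ge> 2 * K + 1" using assms(2) N_def K_def by simp
  have NK2: "N \<le> 4 * K" using assms(3) N_def K_def by simp
  have hB: "h n k = B - D + 1" unfolding h_def B_def D_def by simp
  have F1: "(K - 1) * B = (N - 1) * C1"
  proof -
    have "(k - 1) * ((n - 1) choose (k - 1)) = (n - 1) * ((n - 1 - 1) choose (k - 1 - 1))"
      using assms by (intro times_binomial_minus1_eq) auto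
    moreover have "n - 1 - 1 = n - 2" "k - 1 - 1 = k - 2" by auto
    ultimately have "real ((k - 1) * ((n - 1) choose (k - 1))) = real ((n - 1) * ((n - 2) choose (k - 2)))"
      by simp
    then show ?thesis using assms unfolding B_def C1_def N_def K_def by (simp add: of_nat_diff)
  qed
  have F2: "C2 * ((N - 2) * (N - 3)) = C1 * ((N - K) * (N - K - 1))"
  proof -
    define C3 where "C3 = real ((n - 3) choose (k - 2))"
    have e1: "(n - 2 - (k - 2)) * ((n - 2) choose (k - 2)) = (n - 2) * ((n - 2 - 1) choose (k - 2))"
      by (rule binomial_absorb_comp)
    have e2: "(n - 3 - (k - 2)) * ((n - 3) choose (k - 2)) = (n - 3) * ((n - 3 - 1) choose (k - 2))"
      by (rule binomial_absorb_comp)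
    have n1: "n - 2 - (k - 2) = n - k" "n - 2 - 1 = n - 3" "n - 3 - (k - 2) = n - k - 1" "n - 3 - 1 = n - 4"
      using assms by auto
    have r1: "real (n - k) = N - K" "real (n - 2) = N - 2" "real (n - k - 1) = N - K - 1"
      "real (n - 3) = N - 3"
      using assms unfolding N_def K_def by (auto simp: of_nat_diff)
    have "real ((n - k) * ((n - 2) choose (k - 2))) = real ((n - 2) * ((n - 3) choose (k - 2)))"
      using e1 unfolding n1 by (rule arg_cong)
    then have a1: "(N - K) * C1 = (N - 2) * C3"
      unfolding C1_def C3_def of_nat_mult r1 .
    have "real ((n - k - 1) * ((n - 3) choose (k - 2))) = real ((n - 3) * ((n - 4) choose (k - 2)))"
      using e2 unfolding n1 by (rule arg_cong)
    then have a2: "(N - K - 1) * C3 = (N - 3) * C2"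
      unfolding C2_def C3_def of_nat_mult r1 .
    have "C2 * ((N - 2) * (N - 3)) = (N - 2) * ((N - 3) * C2)" by (simp add: algebra_simps)
    also have "\<dots> = (N - K - 1) * ((N - 2) * C3)" unfolding a2[symmetric] by (simp add: algebra_simps)
    also have "\<dots> = C1 * ((N - K) * (N - K - 1))" unfolding a1[symmetric] by (simp add: algebra_simps)
    finally show ?thesis .
  qed
  have F3: "D * (N - 1) ^ (k - 1) \<le> B * (N - K - 1) ^ (k - 1)"
  proof -
    have "real ((n - k - 1) choose (k - 1)) * real (n - 1) ^ (k - 1)
       \<le> real ((n - 1) choose (k - 1)) * real (n - k - 1) ^ (k - 1)"
      by (rule choose_pow) auto
    moreover have "real (n - 1) = N - 1" "real (n - k - 1) = N - K - 1"
      using assms unfolding N_def K_def by (auto simp: of_nat_diff)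
    ultimately show ?thesis unfolding D_def B_def by simp
  qed
  have Bpos: "B > 0" unfolding B_def using assms by simp
  have C1pos: "C1 > 0" unfolding C1_def using assms by simp
  have C2nn: "C2 \<ge> 0" unfolding C2_def by simp
  have Dnn: "D \<ge> 0" unfolding D_def by simp
  define x where "x = (K - 1) / (N - 1)"
  define r where "r = C2 / C1"
  define q where "q = (N - K - 1) / (N - 1)"
  define u where "u = K / (N - 1)"
  have N1: "N - 1 > 0" using NK1 K8 by simp
  have xu: "0 \<le> x" "x \<le> u" unfolding x_def u_def using N1 K8 by (auto simp: divide_simps)
  have qu: "0 \<le> q" "q \<le> 1 - u" unfolding q_def u_def using N1 NK1 by (auto simp: divide_simps)
  have u14: "1/4 \<le> u" "u \<le> 1/2" unfolding u_def using N1 NK1 NK2 by (auto simp: divide_simps)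
  have r0: "0 \<le> r" unfolding r_def using C1pos C2nn by simp
  have rp: "r \<le> (16/15)^2 * (1 - 7*u/8)^2"
  proof -
    define p where "p = (N - K) / (N - 2)"
    define t where "t = (N - K - 1) / (N - 3)"
    have N3: "N - 3 > 0" "N - 2 > 0" using NK1 K8 by auto
    have "(N - 2) * (N - 3) \<noteq> 0" using N3 by simp
    then have "C2 = C1 * ((N - K) * (N - K - 1)) / ((N - 2) * (N - 3))"
      using F2 by (simp add: eq_divide_eq)
    then have "r = ((N - K) * (N - K - 1)) / ((N - 2) * (N - 3))"
      unfolding r_def using C1pos by simp
    then have r_eq: "r = p * t" unfolding p_def t_def by simp
    have t0: "0 \<le> t" unfolding t_def using N3 NK1 by simp
    have tp: "t \<le> p" unfolding t_def p_def using N3 K8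
      by (simp add: divide_simps algebra_simps)
    have h1: "0 \<le> (N - 8) * (N - 17)" using NK1 K8 by simp
    have h2: "0 \<le> (K - 8) * (N + 13)" using NK1 K8 by simp
    have "(N - K) * (15 * (N - 1)) \<le> 2 * (8 * N - 8 - 7 * K) * (N - 2)"
      using h1 h2 by (simp add: algebra_simps)
    then have "p \<le> 2 * (8 * N - 8 - 7 * K) / (15 * (N - 1))"
      unfolding p_def using N3 N1 by (simp add: divide_simps)
    also have "\<dots> = 16/15 * (1 - 7*u/8)" unfolding u_def using N1 by (simp add: field_simps)
    finally have pc: "p \<le> 16/15 * (1 - 7*u/8)" .
    have "r \<le> p * p" unfolding r_eq using t0 tp t0 by (intro mult_left_mono) auto
    also have "\<dots> \<le> (16/15 * (1 - 7*u/8)) ^ 2"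
      unfolding power2_eq_square[symmetric] using t0 tp pc by (intro power_mono) auto
    also have "\<dots> = (16/15)^2 * (1 - 7*u/8)^2" by (rule power_mult_distrib)
    finally show ?thesis .
  qed
  from key2[OF xu r0 rp qu u14] have kk: "x * (1 + r) < 1" "2 * q^7 < (1 - x * (1 + r))^2" by auto
  define A where "A = C1 + C2"
  have AB: "A = B * (x * (1 + r))"
  proof -
    have Bx: "B * x = C1" unfolding x_def using F1 N1
      by (simp add: field_simps)
    have "B * (x * (1 + r)) = C1 * (1 + r)" using Bx by (simp add: mult.assoc[symmetric])
    also have "\<dots> = C1 + C2" unfolding r_def using C1pos by (simp add: field_simps)
    finally show ?thesis unfolding A_def by simp
  qed
  have q1: "q \<le> 1" using qu u14 by simp
  have "q ^ (k - 1) \<le> q ^ 7" using q1 qu assms(1) by (intro power_decreasing) auto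
  have "D \<le> B * q ^ (k - 1)"
    using F3 N1 unfolding q_def by (simp add: power_divide divide_simps)
  then have DB: "D \<le> B * q ^ 7" using \<open>q ^ (k - 1) \<le> q ^ 7\<close> Bpos
    by (meson mult_left_mono less_imp_le order_trans)
  have "q ^ 7 \<le> 1" using q1 qu by (simp add: power_le_one)
  then have "D \<le> B" using DB Bpos by (meson mult_left_le order_trans less_imp_le)
  have Apos: "A > 0" unfolding A_def using C1pos C2nn by simp
  have "(B - A)^2 = B^2 * (1 - x * (1 + r))^2" unfolding AB by (simp add: power2_eq_square algebra_simps)
  also have "\<dots> > B^2 * (2 * q^7)" using kk Bpos by simp
  finally have "(B - A)^2 > 2 * B * (B * q^7)" by (simp add: power2_eq_square algebra_simps)
  moreover have "2 * B * (B * q^7) \<ge> 2 * B * D" using DB Bpos by simp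
  ultimately have m1: "(B - A)^2 > 2 * B * D" by linarith
  have "(h n k)^2 \<ge> (B - D)^2" unfolding hB using \<open>D \<le> B\<close> by (intro power_mono) auto
  moreover have "(B - D)^2 \<ge> B^2 - 2 * B * D" using Dnn by (simp add: power2_eq_square algebra_simps)
  moreover have "(B - A)^2 = A^2 - 2 * A * B + B^2" by (simp add: power2_eq_square algebra_simps)
  ultimately have "A^2 + (h n k)^2 > 2 * A * B" using m1 by linarith
  then have "A + (h n k)^2 / A > 2 * B" using Apos by (simp add: field_simps power2_eq_square)
  then show ?thesis unfolding A_def C1_def C2_def B_def .
qed

end
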